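(* Let $\Omega\subset\mathbb{R}^n$ be a domain with $\mathrm{width}(\Omega)<+\infty$, $f\in L^\infty(\Omega)$, $g\in C(\partial\Omega)\cap L^\infty(\partial\Omega)$, $(\varepsilon_i)$ a sequence of positive numbers with $\varepsilon_i\to0$, and for each $i$ let $u_i:\overline\Omega\to\mathbb{R}$ be a bounded solution of $\Delta^{\varepsilon_i}_\infty u_i=\varepsilon_i^2 f$ in $\Omega$, $u_i=g$ on $\partial\Omega$. Then for every $y_0\in\partial\Omega$ and every $\varepsilon>0$ there exist $\delta>0$ and $N\in\mathbb{N}$ such that for all $x\in\Omega$ with $d(y_0,x)\le\delta$ and all $i>N$, \[ |u_i(x)-g(y_0)|\le\varepsilon. \]
   Context: $d(x,y)$ is the intrinsic metric of $\overline\Omega$ (infimum of lengths of paths in $\overline\Omega$ from $x$ to $y$); $\mathrm{width}(\Omega)=\sup_{x\in\Omega}\inf_{y\in\partial\Omega}d(y,x)$. For $\varepsilon>0$, $B_x(\varepsilon)=\{y\in\overline\Omega: d(x,y)<\varepsilon\}$ and $\Delta^{\varepsilon}_\infty w(x)=\inf_{y\in B_x(\varepsilon)}w(y)+\sup_{y\in B_x(\varepsilon)}w(y)-2w(x)$. *)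

theory Defs
  imports "HOL-Analysis.Analysis"
begin

definition path_len :: "(real \<Rightarrow> 'a::metric_space) \<Rightarrow> ereal" where
  "path_len \<gamma> = (SUP p \<in> {(n::nat, t::nat \<Rightarrow> real). t 0 = 0 \<and> t n = 1 \<and> (\<forall>k<n. t k \<le> t (Suc k))}.
      ereal (\<Sum>k<fst p. dist (\<gamma> (snd p (Suc k))) (\<gamma> (snd p k))))"

text \<open>Intrinsic metric of a set S: infimum of lengths of paths in S from x to y (+\<infinity> if none).\<close>
definition intrinsic_dist :: "'a::metric_space set \<Rightarrow> 'a \<Rightarrow> 'a \<Rightarrow> ereal" where
  "intrinsic_dist S x y = (INF \<gamma> \<in> {\<gamma>. path \<gamma> \<and> path_image \<gamma> \<subseteq> S \<and> pathstart \<gamma> = x \<and> pathfinish \<gamma> = y}.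
      path_len \<gamma>)"

definition width :: "'a::metric_space set \<Rightarrow> ereal" where
  "width \<Omega> = (SUP x \<in> \<Omega>. INF y \<in> frontier \<Omega>. intrinsic_dist (closure \<Omega>) y x)"

definition iball :: "'a::metric_space set \<Rightarrow> 'a \<Rightarrow> real \<Rightarrow> 'a set" where
  "iball \<Omega> x e = {y \<in> closure \<Omega>. intrinsic_dist (closure \<Omega>) x y < ereal e}"

definition eps_inf_laplacian :: "'a::metric_space set \<Rightarrow> real \<Rightarrow> ('a \<Rightarrow> real) \<Rightarrow> 'a \<Rightarrow> real" where
  "eps_inf_laplacian \<Omega> e w x =
     (INF y \<in> iball \<Omega> x e. w y) + (SUP y \<in> iball \<Omega> x e. w y) - 2 * w x"

end

theory Submission
  imports Defs
begin



definition vpart :: "real \<Rightarrow> real \<Rightarrow> (nat \<times> (nat \<Rightarrow> real)) set" where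
  "vpart a b = {(n, t). t 0 = a \<and> t n = b \<and> (\<forall>k<n. t k \<le> t (Suc k))}"

definition psum :: "(real \<Rightarrow> 'a::metric_space) \<Rightarrow> nat \<times> (nat \<Rightarrow> real) \<Rightarrow> real" where
  "psum \<gamma> p = (\<Sum>k<fst p. dist (\<gamma> (snd p (Suc k))) (\<gamma> (snd p k)))"

definition varl :: "(real \<Rightarrow> 'a::metric_space) \<Rightarrow> real \<Rightarrow> real \<Rightarrow> ereal" where
  "varl \<gamma> a b = (SUP p \<in> vpart a b. ereal (psum \<gamma> p))"

lemma path_len_varl: "path_len \<gamma> = varl \<gamma> 0 1"
  unfolding path_len_def varl_def vpart_def psum_def by simp

lemma part_mono: assumes "(n, t) \<in> vpart a b" "i \<le> j" "j \<le> n" shows "t i \<le> t j"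
  using assms(2,3)
proof (induction j)
  case 0 then show ?case by simp
next
  case (Suc j)
  show ?case
  proof (cases "i = Suc j")
    case True then show ?thesis by simp
  next
    case False
    then have "i \<le> j" using Suc by simp
    then have "t i \<le> t j" using Suc by simp
    also have "t j \<le> t (Suc j)" using assms(1) Suc(3) unfolding vpart_def by auto
    finally show ?thesis .
  qed
qed

lemma part_range: assumes "(n, t) \<in> vpart a b" "k \<le> n" shows "a \<le> t k" "t k \<le> b"
  using part_mono[OF assms(1), of 0 k] part_mono[OF assms(1), of k n] assms unfolding vpart_def by auto

lemma psum_nonneg: "0 \<le> psum \<gamma> p"
  unfolding psum_def by (simp add: sum_nonneg)

lemma part_two: "a \<le> b \<Longrightarrow> (1, \<lambda>k. if k = 0 then a else b) \<in> vpart a b"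
  unfolding vpart_def by auto

lemma part_ne: "a \<le> b \<Longrightarrow> vpart a b \<noteq> {}"
  using part_two by blast

lemma varl_ge: "p \<in> vpart a b \<Longrightarrow> ereal (psum \<gamma> p) \<le> varl \<gamma> a b"
  unfolding varl_def by (rule SUP_upper)

lemma varl_le: "(\<And>p. p \<in> vpart a b \<Longrightarrow> ereal (psum \<gamma> p) \<le> c) \<Longrightarrow> varl \<gamma> a b \<le> c"
  unfolding varl_def by (rule SUP_least)

lemma dist_le_varl: "a \<le> b \<Longrightarrow> ereal (dist (\<gamma> a) (\<gamma> b)) \<le> varl \<gamma> a b"
proof -
  assume "a \<le> b"
  then have "ereal (psum \<gamma> (1, \<lambda>k. if k = 0 then a else b)) \<le> varl \<gamma> a b"
    using varl_ge part_two by blast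
  then show ?thesis by (simp add: psum_def dist_commute)
qed

lemma varl_nonneg: "a \<le> b \<Longrightarrow> 0 \<le> varl \<gamma> a b"
  using dist_le_varl[of a b \<gamma>] by (metis ereal_less_eq(5) order_trans zero_le_dist)




lemma sum_split_add: fixes f :: "nat \<Rightarrow> 'b::comm_monoid_add" shows "(\<Sum>k<m+n. f k) = (\<Sum>k<m. f k) + (\<Sum>k<n. f (m + k))"
proof (induction n)
  case 0 show ?case by simp
next
  case (Suc n) then show ?case by (simp add: add.assoc)
qed

lemma psum_concat:
  assumes p1: "(n1, t1) \<in> vpart a b" and p2: "(n2, t2) \<in> vpart b c"
  shows "(n1 + n2, \<lambda>k. if k \<le> n1 then t1 k else t2 (k - n1)) \<in> vpart a c"
    and "psum \<gamma> (n1 + n2, \<lambda>k. if k \<le> n1 then t1 k else t2 (k - n1)) = psum \<gamma> (n1, t1) + psum \<gamma> (n2, t2)"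
proof -
  let ?t = "\<lambda>k. if k \<le> n1 then t1 k else t2 (k - n1)"
  have e1: "t1 0 = a" "t1 n1 = b" "\<forall>k<n1. t1 k \<le> t1 (Suc k)" using p1 unfolding vpart_def by auto
  have e2: "t2 0 = b" "t2 n2 = c" "\<forall>k<n2. t2 k \<le> t2 (Suc k)" using p2 unfolding vpart_def by auto
  have tn: "?t (n1 + k) = t2 k" for k using e1 e2 by (cases k) auto
  have m: "?t k \<le> ?t (Suc k)" if k: "k < n1 + n2" for k
  proof (cases "k < n1")
    case True then show ?thesis using e1 by auto
  next
    case False
    then obtain j where j: "k = n1 + j" "j < n2" using k by (metis add_less_cancel_left le_Suc_ex not_less)
    have "?t k = t2 j" using tn[of j] j e1 e2 by simp
    moreover have "?t (Suc k) = t2 (Suc j)" using tn[of "Suc j"] j by simp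
    ultimately show ?thesis using e2 j by simp
  qed
  have "?t 0 = a" "?t (n1 + n2) = c" using e1 e2 tn[of n2] by auto
  then show "(n1 + n2, ?t) \<in> vpart a c" using m unfolding vpart_def by blast
  have "psum \<gamma> (n1 + n2, ?t) = (\<Sum>k<n1. dist (\<gamma> (?t (Suc k))) (\<gamma> (?t k))) + (\<Sum>k<n2. dist (\<gamma> (?t (Suc (n1 + k)))) (\<gamma> (?t (n1 + k))))"
    unfolding psum_def by (simp add: sum_split_add)
  also have "(\<Sum>k<n1. dist (\<gamma> (?t (Suc k))) (\<gamma> (?t k))) = psum \<gamma> (n1, t1)"
    unfolding psum_def by (intro sum.cong) auto
  also have "(\<Sum>k<n2. dist (\<gamma> (?t (Suc (n1 + k)))) (\<gamma> (?t (n1 + k)))) = psum \<gamma> (n2, t2)"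
    unfolding psum_def using tn by (intro sum.cong) (auto simp del: add_Suc_right simp: add_Suc_right[symmetric])
  finally show "psum \<gamma> (n1 + n2, ?t) = psum \<gamma> (n1, t1) + psum \<gamma> (n2, t2)" .
qed

lemma varl_super:
  assumes "a \<le> b" "b \<le> c"
  shows "varl \<gamma> a b + varl \<gamma> b c \<le> varl \<gamma> a c"
proof -
  have ne1: "vpart a b \<noteq> {}" and ne2: "vpart b c \<noteq> {}" using part_ne assms by auto
  have key: "ereal (psum \<gamma> p1) + ereal (psum \<gamma> p2) \<le> varl \<gamma> a c" if "p1 \<in> vpart a b" "p2 \<in> vpart b c" for p1 p2
  proof -
    obtain n1 t1 where p1: "p1 = (n1, t1)" by fastforce
    obtain n2 t2 where p2: "p2 = (n2, t2)" by fastforce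
    note cc = psum_concat[OF that(1)[unfolded p1] that(2)[unfolded p2]]
    have "ereal (psum \<gamma> p1 + psum \<gamma> p2) = ereal (psum \<gamma> (n1 + n2, \<lambda>k. if k \<le> n1 then t1 k else t2 (k - n1)))"
      using cc(2)[of \<gamma>] p1 p2 by simp
    also have "\<dots> \<le> varl \<gamma> a c" by (rule varl_ge[OF cc(1)])
    finally have "ereal (psum \<gamma> p1 + psum \<gamma> p2) \<le> varl \<gamma> a c" .
    then show ?thesis by simp
  qed
  have nm: "varl \<gamma> b c \<noteq> - \<infinity>" using varl_nonneg[OF assms(2), of \<gamma>] by auto
  have "(SUP p1\<in>vpart a b. ereal (psum \<gamma> p1) + varl \<gamma> b c) = varl \<gamma> a b + varl \<gamma> b c"
    unfolding varl_def[of \<gamma> a b] by (rule SUP_ereal_add_left[OF ne1 nm])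
  then have "varl \<gamma> a b + varl \<gamma> b c = (SUP p1\<in>vpart a b. ereal (psum \<gamma> p1) + varl \<gamma> b c)" by simp
  also have "\<dots> \<le> varl \<gamma> a c"
  proof (rule SUP_least)
    fix p1 assume p1: "p1 \<in> vpart a b"
    have "(SUP p2\<in>vpart b c. ereal (psum \<gamma> p1) + ereal (psum \<gamma> p2)) = ereal (psum \<gamma> p1) + varl \<gamma> b c"
      unfolding varl_def[of \<gamma> b c] by (rule SUP_ereal_add_right[OF ne2]) simp
    moreover have "(SUP p2\<in>vpart b c. ereal (psum \<gamma> p1) + ereal (psum \<gamma> p2)) \<le> varl \<gamma> a c"
    proof (rule SUP_least)
      fix p2 assume "p2 \<in> vpart b c"
      then show "ereal (psum \<gamma> p1) + ereal (psum \<gamma> p2) \<le> varl \<gamma> a c" using key p1 by blast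
    qed
    ultimately show "ereal (psum \<gamma> p1) + varl \<gamma> b c \<le> varl \<gamma> a c" by simp
  qed
  finally show ?thesis .
qed

lemma clamp_tri:
  fixes x y b :: real
  assumes "x \<le> y"
  shows "dist (\<gamma> y) (\<gamma> x) \<le> dist (\<gamma> (min y b)) (\<gamma> (min x b)) + dist (\<gamma> (max y b)) (\<gamma> (max x b))"
proof (cases "y \<le> b")
  case True
  then have "min y b = y" "min x b = x" "max y b = b" "max x b = b" using assms by auto
  then show ?thesis by simp
next
  case False
  show ?thesis
  proof (cases "x \<le> b")
    case True
    then have "min y b = b" "min x b = x" "max y b = y" "max x b = b" using False by auto
    then show ?thesis by simp (metis add.commute dist_commute dist_triangle)
  next
    case False2: False
    then have "min y b = b" "min x b = b" "max y b = y" "max x b = x" using False by auto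
    then show ?thesis by simp
  qed
qed

lemma part_min: "(n, t) \<in> vpart a c \<Longrightarrow> a \<le> b \<Longrightarrow> b \<le> c \<Longrightarrow> (n, \<lambda>k. min (t k) b) \<in> vpart a b"
  unfolding vpart_def by (auto simp: min_def)

lemma part_max: "(n, t) \<in> vpart a c \<Longrightarrow> a \<le> b \<Longrightarrow> b \<le> c \<Longrightarrow> (n, \<lambda>k. max (t k) b) \<in> vpart b c"
  unfolding vpart_def by (auto simp: max_def)

lemma psum_clamp:
  assumes "(n, t) \<in> vpart a c"
  shows "psum \<gamma> (n, t) \<le> psum \<gamma> (n, \<lambda>k. min (t k) b) + psum \<gamma> (n, \<lambda>k. max (t k) b)"
  unfolding psum_def fst_conv snd_conv sum.distrib[symmetric]
  by (intro sum_mono clamp_tri) (use assms in \<open>auto simp: vpart_def\<close>)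

lemma varl_sub:
  assumes "a \<le> b" "b \<le> c"
  shows "varl \<gamma> a c \<le> varl \<gamma> a b + varl \<gamma> b c"
proof (rule varl_le)
  fix p assume p: "p \<in> vpart a c"
  obtain n t where pt: "p = (n, t)" by fastforce
  have "ereal (psum \<gamma> p) \<le> ereal (psum \<gamma> (n, \<lambda>k. min (t k) b)) + ereal (psum \<gamma> (n, \<lambda>k. max (t k) b))"
    using psum_clamp[of n t a c \<gamma> b] p pt by simp
  also have "\<dots> \<le> varl \<gamma> a b + varl \<gamma> b c"
    by (intro add_mono varl_ge part_min part_max) (use p pt assms in auto)
  finally show "ereal (psum \<gamma> p) \<le> varl \<gamma> a b + varl \<gamma> b c" .
qed

lemma varl_add:
  assumes "a \<le> b" "b \<le> c"
  shows "varl \<gamma> a c = varl \<gamma> a b + varl \<gamma> b c"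
  using varl_sub[OF assms, of \<gamma>] varl_super[OF assms, of \<gamma>] by (rule antisym)

lemma varl_reflect_le: "varl \<gamma> (c - b) (c - a) \<le> varl (\<lambda>r. \<gamma> (c - r)) a b"
proof (rule varl_le)
  fix p assume p: "p \<in> vpart (c - b) (c - a)"
  obtain n t where pt: "p = (n, t)" by fastforce
  have q: "(n, \<lambda>k. c - t (n - k)) \<in> vpart a b"
  proof -
    have t0: "t 0 = c - b" and tn: "t n = c - a" and tm: "\<And>k. k < n \<Longrightarrow> t k \<le> t (Suc k)"
      using p pt unfolding vpart_def by auto
    have m: "c - t (n - k) \<le> c - t (n - Suc k)" if k: "k < n" for k
    proof -
      have e: "n - k = Suc (n - Suc k)" using k by (simp add: Suc_diff_Suc)
      have "n - Suc k < n" using k by simp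
      then have "t (n - Suc k) \<le> t (Suc (n - Suc k))" by (rule tm)
      then show ?thesis unfolding e by simp
    qed
    show ?thesis unfolding vpart_def using t0 tn m by auto
  qed
  have "psum (\<lambda>r. \<gamma> (c - r)) (n, \<lambda>k. c - t (n - k)) = (\<Sum>k<n. dist (\<gamma> (t (Suc (n - Suc k)))) (\<gamma> (t (n - Suc k))))"
    unfolding psum_def by (intro sum.cong) (auto simp: Suc_diff_Suc dist_commute)
  also have "\<dots> = psum \<gamma> p"
    unfolding psum_def pt using sum.nat_diff_reindex[of "\<lambda>i. dist (\<gamma> (t (Suc i))) (\<gamma> (t i))" n] by simp
  finally have "psum (\<lambda>r. \<gamma> (c - r)) (n, \<lambda>k. c - t (n - k)) = psum \<gamma> p" .
  then show "ereal (psum \<gamma> p) \<le> varl (\<lambda>r. \<gamma> (c - r)) a b"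
    using varl_ge[OF q, of "\<lambda>r. \<gamma> (c - r)"] by simp
qed

lemma varl_reflect: "varl (\<lambda>r. \<gamma> (c - r)) a b = varl \<gamma> (c - b) (c - a)"
proof (rule antisym)
  show "varl \<gamma> (c - b) (c - a) \<le> varl (\<lambda>r. \<gamma> (c - r)) a b" by (rule varl_reflect_le)
  have "varl (\<lambda>r. \<gamma> (c - r)) (c - (c - a)) (c - (c - b)) \<le> varl (\<lambda>r. \<gamma> (c - (c - r))) (c - b) (c - a)"
    by (rule varl_reflect_le)
  moreover have "(\<lambda>r. \<gamma> (c - (c - r))) = \<gamma>" by simp
  moreover have "c - (c - a) = a" "c - (c - b) = b" by simp_all
  ultimately show "varl (\<lambda>r. \<gamma> (c - r)) a b \<le> varl \<gamma> (c - b) (c - a)" by metis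
qed




lemma psum_cong: "(\<And>k. k \<le> n \<Longrightarrow> g (t k) = h (s k)) \<Longrightarrow> psum g (n, t) = psum h (n, s)"
  unfolding psum_def by (intro sum.cong) auto

lemma varl_right:
  assumes cont: "continuous_on {t..b} \<gamma>" and tb: "t < b" and fin: "varl \<gamma> t b < \<infinity>" and sig: "\<sigma> > 0"
  shows "\<exists>s. t < s \<and> s \<le> b \<and> varl \<gamma> t s < ereal \<sigma>"
proof (rule ccontr)
  assume "\<not> ?thesis"
  then have H: "\<And>s. t < s \<Longrightarrow> s \<le> b \<Longrightarrow> ereal \<sigma> \<le> varl \<gamma> t s" by (meson not_le)
  obtain Vb where Vb: "varl \<gamma> t b = ereal Vb"
    using fin varl_nonneg[of t b \<gamma>] tb by (cases "varl \<gamma> t b") auto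
  have "ereal (Vb - \<sigma>/2) < varl \<gamma> t b" using Vb sig by simp
  then obtain p where p: "p \<in> vpart t b" "ereal (Vb - \<sigma>/2) < ereal (psum \<gamma> p)"
    unfolding varl_def less_SUP_iff by blast
  obtain n q where pq: "p = (n, q)" by fastforce
  have pn: "(n, q) \<in> vpart t b" using p pq by simp
  have q0: "q 0 = t" and qn: "q n = b" and qm: "\<And>k. k < n \<Longrightarrow> q k \<le> q (Suc k)"
    using pn unfolding vpart_def by auto
  define M where "M = q ` {k. k \<le> n \<and> t < q k}"
  have Mfin: "finite M" unfolding M_def by simp
  have Mne: "b \<in> M" unfolding M_def using qn tb by auto
  define m where "m = Min M"
  have mM: "m \<in> M" unfolding m_def using Mfin Mne by (intro Min_in) auto
  have tm: "t < m" using mM unfolding M_def by auto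
  have mb: "m \<le> b" unfolding m_def using Mfin Mne by simp
  have mle: "\<And>k. k \<le> n \<Longrightarrow> t < q k \<Longrightarrow> m \<le> q k" unfolding m_def M_def using Mfin by (simp add: M_def)
  have "t \<in> {t..b}" using tb by simp
  then obtain \<delta> where d: "\<delta> > 0" "\<And>x'. x' \<in> {t..b} \<Longrightarrow> dist x' t < \<delta> \<Longrightarrow> dist (\<gamma> x') (\<gamma> t) < \<sigma>/4"
    using cont sig unfolding continuous_on_iff by (metis divide_pos_pos zero_less_numeral)
  define \<tau> where "\<tau> = min m (t + \<delta>/2)"
  have t\<tau>: "t < \<tau>" "\<tau> \<le> m" "\<tau> \<le> b" using tm d mb unfolding \<tau>_def by auto
  define c where "c = dist (\<gamma> \<tau>) (\<gamma> t)"
  have c4: "c < \<sigma>/4" unfolding c_def using d t\<tau> \<tau>_def by (intro d(2)) (auto simp: dist_real_def)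
  define I where "I k = (if t < q k then 1 else 0::real)" for k
  have qge: "\<And>k. k \<le> n \<Longrightarrow> t \<le> q k" using part_range[OF pn] by auto
  have trm: "dist (\<gamma> (min (q (Suc k)) \<tau>)) (\<gamma> (min (q k) \<tau>)) = c * (I (Suc k) - I k)" if k: "k < n" for k
  proof (cases "t < q k")
    case True
    then have "m \<le> q k" using mle k by simp
    moreover have "q k \<le> q (Suc k)" using qm k by simp
    ultimately have "min (q (Suc k)) \<tau> = \<tau>" "min (q k) \<tau> = \<tau>" "I (Suc k) = 1" "I k = 1"
      using t\<tau> True unfolding I_def by auto
    then show ?thesis by simp
  next
    case False
    have "t \<le> q k" using qge k by simp
    then have qk: "q k = t" using False by linarith
    show ?thesis
    proof (cases "t < q (Suc k)")
      case True
      then have "m \<le> q (Suc k)" using mle k by simp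
      then have "min (q (Suc k)) \<tau> = \<tau>" "min (q k) \<tau> = t" "I (Suc k) = 1" "I k = 0"
        using t\<tau> True qk unfolding I_def by auto
      then show ?thesis by (simp add: c_def)
    next
      case False
      then have "q (Suc k) = t" using qge[of "Suc k"] k by force
      then show ?thesis using qk unfolding I_def by simp
    qed
  qed
  have "psum \<gamma> (n, \<lambda>k. min (q k) \<tau>) = (\<Sum>k<n. c * (I (Suc k) - I k))"
    unfolding psum_def by (intro sum.cong) (auto simp: trm)
  also have "\<dots> = c * (I n - I 0)" by (simp add: sum_distrib_left[symmetric] sum_lessThan_telescope)
  also have "\<dots> = c" unfolding I_def using q0 qn tb by simp
  finally have pmin: "psum \<gamma> (n, \<lambda>k. min (q k) \<tau>) = c" .
  have F1: "psum \<gamma> (n, q) \<le> c + psum \<gamma> (n, \<lambda>k. max (q k) \<tau>)"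
    using psum_clamp[OF pn, of \<gamma> \<tau>] pmin by simp
  have F2: "ereal (psum \<gamma> (n, \<lambda>k. max (q k) \<tau>)) \<le> varl \<gamma> \<tau> b"
    by (intro varl_ge part_max[OF pn]) (use t\<tau> in auto)
  have F3: "varl \<gamma> t \<tau> + varl \<gamma> \<tau> b \<le> ereal Vb"
    using varl_super[of t \<tau> b \<gamma>] t\<tau> Vb by simp
  have F4: "ereal \<sigma> \<le> varl \<gamma> t \<tau>" using H t\<tau> by simp
  obtain Vt where Vt: "varl \<gamma> \<tau> b = ereal Vt"
  proof -
    have "0 \<le> varl \<gamma> \<tau> b" using varl_nonneg[of \<tau> b \<gamma>] t\<tau> by simp
    moreover have "varl \<gamma> \<tau> b \<le> ereal Vb"
    proof -
      have "varl \<gamma> \<tau> b \<le> varl \<gamma> t \<tau> + varl \<gamma> \<tau> b"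
        using varl_nonneg[of t \<tau> \<gamma>] t\<tau> by (intro add_increasing) auto
      then show "varl \<gamma> \<tau> b \<le> ereal Vb" using F3 by (rule order_trans)
    qed
    ultimately show ?thesis using that by (cases "varl \<gamma> \<tau> b") auto
  qed
  have a: "psum \<gamma> (n, \<lambda>k. max (q k) \<tau>) \<le> Vt" using F2 Vt by simp
  have b: "Vb - \<sigma>/2 < psum \<gamma> (n, q)" using p(2) pq by simp
  obtain X where X: "varl \<gamma> t \<tau> = ereal X"
  proof -
    have "varl \<gamma> t \<tau> \<noteq> \<infinity>" using F3 Vt by auto
    moreover have "varl \<gamma> t \<tau> \<noteq> - \<infinity>" using F4 by auto
    ultimately show ?thesis using that by (cases "varl \<gamma> t \<tau>") auto
  qed
  have c3: "X + Vt \<le> Vb" using F3 X Vt by simp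
  have c4': "\<sigma> \<le> X" using F4 X by simp
  have "Vb - \<sigma>/2 < c + Vt" "\<sigma> + Vt \<le> Vb" using a b F1 c3 c4' by linarith+
  then show False using c4 sig by linarith
qed

lemma varl_left:
  assumes cont: "continuous_on {a..t} \<gamma>" and at: "a < t" and fin: "varl \<gamma> a t < \<infinity>" and sig: "\<sigma> > 0"
  shows "\<exists>s. a \<le> s \<and> s < t \<and> varl \<gamma> s t < ereal \<sigma>"
proof -
  let ?g = "\<lambda>r. \<gamma> (0 - r)"
  have rv: "varl ?g x y = varl \<gamma> (- y) (- x)" for x y using varl_reflect[of \<gamma> 0 x y] by simp
  have c: "continuous_on {-t..-a} ?g"
    by (rule continuous_on_compose2[OF cont]) (auto intro: continuous_intros)
  have "varl ?g (-t) (-a) < \<infinity>" using rv fin by simp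
  then obtain s where "-t < s" "s \<le> -a" "varl ?g (-t) s < ereal \<sigma>"
    using varl_right[OF c _ _ sig] at by auto
  then show ?thesis using rv[of "-t" s] by (intro exI[of _ "-s"]) auto
qed

lemma path_len_subpath:
  assumes "a \<le> b"
  shows "path_len (subpath a b \<gamma>) \<le> varl \<gamma> a b"
  unfolding path_len_varl
proof (rule varl_le)
  fix p assume p: "p \<in> vpart 0 1"
  obtain n t where pt: "p = (n, t)" by fastforce
  have q: "(n, \<lambda>k. (b - a) * t k + a) \<in> vpart a b"
    using p pt assms unfolding vpart_def by (auto intro: mult_left_mono)
  have "psum (subpath a b \<gamma>) p = psum \<gamma> (n, \<lambda>k. (b - a) * t k + a)"
    unfolding pt by (rule psum_cong) (simp add: subpath_def)
  then show "ereal (psum (subpath a b \<gamma>) p) \<le> varl \<gamma> a b" using varl_ge[OF q] by simp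
qed

lemma path_len_reverse: "path_len (reversepath \<gamma>) = path_len \<gamma>"
  unfolding path_len_varl reversepath_def using varl_reflect[of \<gamma> 1 0 1] by simp

lemma path_len_join:
  assumes "pathfinish \<gamma>1 = pathstart \<gamma>2"
  shows "path_len (\<gamma>1 +++ \<gamma>2) \<le> path_len \<gamma>1 + path_len \<gamma>2"
proof -
  let ?j = "\<gamma>1 +++ \<gamma>2"
  have j1: "?j x = \<gamma>1 (2 * x)" if "x \<le> 1/2" for x using that by (simp add: joinpaths_def)
  have j2: "?j x = \<gamma>2 (2 * x - 1)" if "1/2 \<le> x" for x
  proof (cases "x = 1/2")
    case True
    then have e: "2 * x = 1" "2 * x - 1 = 0" by simp_all
    have "?j x = \<gamma>1 (2 * x)" using True by (simp add: joinpaths_def)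
    also have "\<dots> = \<gamma>1 1" using e by simp
    also have "\<dots> = \<gamma>2 0" using assms by (simp add: pathfinish_def pathstart_def)
    also have "\<dots> = \<gamma>2 (2 * x - 1)" using e by simp
    finally show ?thesis .
  next
    case False then show ?thesis using that by (simp add: joinpaths_def)
  qed
  have A: "varl ?j 0 (1/2) \<le> path_len \<gamma>1"
    unfolding path_len_varl
  proof (rule varl_le)
    fix p assume p: "p \<in> vpart 0 (1/2)"
    obtain n t where pt: "p = (n, t)" by fastforce
    have q: "(n, \<lambda>k. 2 * t k) \<in> vpart 0 1" using p pt unfolding vpart_def by auto
    have "psum ?j p = psum \<gamma>1 (n, \<lambda>k. 2 * t k)"
      unfolding pt by (rule psum_cong) (use part_range[OF p[unfolded pt]] j1 in auto)
    then show "ereal (psum ?j p) \<le> varl \<gamma>1 0 1" using varl_ge[OF q] by simp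
  qed
  have B: "varl ?j (1/2) 1 \<le> path_len \<gamma>2"
    unfolding path_len_varl
  proof (rule varl_le)
    fix p assume p: "p \<in> vpart (1/2) 1"
    obtain n t where pt: "p = (n, t)" by fastforce
    have q: "(n, \<lambda>k. 2 * t k - 1) \<in> vpart 0 1" using p pt unfolding vpart_def by auto
    have "psum ?j p = psum \<gamma>2 (n, \<lambda>k. 2 * t k - 1)"
      unfolding pt by (rule psum_cong) (use part_range[OF p[unfolded pt]] j2 in auto)
    then show "ereal (psum ?j p) \<le> varl \<gamma>2 0 1" using varl_ge[OF q] by simp
  qed
  have "path_len ?j \<le> varl ?j 0 (1/2) + varl ?j (1/2) 1"
    unfolding path_len_varl by (rule varl_sub) auto
  also have "\<dots> \<le> path_len \<gamma>1 + path_len \<gamma>2" using A B by (rule add_mono)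
  finally show ?thesis .
qed




definition Paths :: "'a::metric_space set \<Rightarrow> 'a \<Rightarrow> 'a \<Rightarrow> (real \<Rightarrow> 'a) set" where
  "Paths S x y = {\<gamma>. path \<gamma> \<and> path_image \<gamma> \<subseteq> S \<and> pathstart \<gamma> = x \<and> pathfinish \<gamma> = y}"

lemma idist_def2: "intrinsic_dist S x y = (INF \<gamma>\<in>Paths S x y. path_len \<gamma>)"
  unfolding intrinsic_dist_def Paths_def by simp

lemma idist_le_path: "\<gamma> \<in> Paths S x y \<Longrightarrow> intrinsic_dist S x y \<le> path_len \<gamma>"
  unfolding idist_def2 by (rule INF_lower)

lemma path_len_nonneg: "0 \<le> path_len \<gamma>"
  unfolding path_len_varl by (rule varl_nonneg) simp

lemma idist_nonneg: "0 \<le> intrinsic_dist S x y"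
  unfolding idist_def2 by (rule INF_greatest) (rule path_len_nonneg)

lemma idist_refl: assumes "x \<in> S" shows "intrinsic_dist S x x = 0"
proof -
  have "(\<lambda>_. x) \<in> Paths S x x" using assms
    unfolding Paths_def path_def pathstart_def pathfinish_def path_image_def by auto
  moreover have "path_len (\<lambda>_::real. x) \<le> 0"
    unfolding path_len_varl by (rule varl_le) (simp add: psum_def)
  ultimately have "intrinsic_dist S x x \<le> 0" using idist_le_path order_trans by blast
  then show ?thesis using idist_nonneg[of S x x] by simp
qed

lemma reverse_Paths: "\<gamma> \<in> Paths S y x \<Longrightarrow> reversepath \<gamma> \<in> Paths S x y"
  unfolding Paths_def by auto

lemma idist_sym: "intrinsic_dist S x y = intrinsic_dist S y x"
proof -
  have *: "intrinsic_dist S a b \<le> intrinsic_dist S b a" for a b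
    unfolding idist_def2[of S b a]
  proof (rule INF_greatest)
    fix \<gamma> assume "\<gamma> \<in> Paths S b a"
    then have "intrinsic_dist S a b \<le> path_len (reversepath \<gamma>)" by (intro idist_le_path reverse_Paths)
    then show "intrinsic_dist S a b \<le> path_len \<gamma>" by (simp add: path_len_reverse)
  qed
  show ?thesis using *[of x y] *[of y x] by simp
qed

lemma idist_finite_path:
  assumes "intrinsic_dist S x y < ereal r"
  shows "\<exists>\<gamma>\<in>Paths S x y. path_len \<gamma> < ereal r"
  using assms unfolding idist_def2 INF_less_iff by blast

lemma join_Paths: "\<gamma>1 \<in> Paths S x y \<Longrightarrow> \<gamma>2 \<in> Paths S y z \<Longrightarrow> \<gamma>1 +++ \<gamma>2 \<in> Paths S x z"
  unfolding Paths_def by (auto simp: path_image_join)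

lemma idist_triangle: "intrinsic_dist S x z \<le> intrinsic_dist S x y + intrinsic_dist S y z"
proof (rule ereal_le_epsilon2)
  fix e :: real assume e: "0 < e"
  show "intrinsic_dist S x z \<le> intrinsic_dist S x y + intrinsic_dist S y z + ereal e"
  proof (cases "intrinsic_dist S x y = \<infinity> \<or> intrinsic_dist S y z = \<infinity>")
    case True
    then show ?thesis using idist_nonneg[of S x y] idist_nonneg[of S y z] by auto
  next
    case False
    then obtain a b where ab: "intrinsic_dist S x y = ereal a" "intrinsic_dist S y z = ereal b"
      using idist_nonneg[of S x y] idist_nonneg[of S y z]
      by (metis ereal_infty_less_eq(2) less_ereal.simps(2) less_ereal.simps(3) real_of_ereal.elims zero_ereal_def)
    obtain \<gamma>1 where g1: "\<gamma>1 \<in> Paths S x y" "path_len \<gamma>1 < ereal (a + e/2)"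
      using idist_finite_path[of S x y "a + e/2"] ab e by auto
    obtain \<gamma>2 where g2: "\<gamma>2 \<in> Paths S y z" "path_len \<gamma>2 < ereal (b + e/2)"
      using idist_finite_path[of S y z "b + e/2"] ab e by auto
    have "intrinsic_dist S x z \<le> path_len (\<gamma>1 +++ \<gamma>2)" by (intro idist_le_path join_Paths[OF g1(1) g2(1)])
    also have "\<dots> \<le> path_len \<gamma>1 + path_len \<gamma>2"
      by (rule path_len_join) (use g1 g2 in \<open>auto simp: Paths_def\<close>)
    also have "\<dots> \<le> ereal (a + e/2) + ereal (b + e/2)" using g1 g2 by (intro add_mono) auto
    also have "\<dots> = intrinsic_dist S x y + intrinsic_dist S y z + ereal e" using ab by simp
    finally show ?thesis .
  qed
qed

lemma dist_le_idist: "ereal (dist x y) \<le> intrinsic_dist S x y"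
  unfolding idist_def2
proof (rule INF_greatest)
  fix \<gamma> assume "\<gamma> \<in> Paths S x y"
  then have "x = \<gamma> 0" "y = \<gamma> 1" unfolding Paths_def pathstart_def pathfinish_def by auto
  then show "ereal (dist x y) \<le> path_len \<gamma>" unfolding path_len_varl using dist_le_varl[of 0 1 \<gamma>] by simp
qed

lemma idist_le_varl:
  fixes \<gamma> :: "real \<Rightarrow> 'a::real_normed_vector"
  assumes "path \<gamma>" "path_image \<gamma> \<subseteq> S" "0 \<le> a" "a \<le> b" "b \<le> 1"
  shows "intrinsic_dist S (\<gamma> a) (\<gamma> b) \<le> varl \<gamma> a b"
proof -
  have "subpath a b \<gamma> \<in> Paths S (\<gamma> a) (\<gamma> b)"
    unfolding Paths_def using assms path_image_subpath_subset[of a b \<gamma>]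
    by (auto intro: path_subpath simp: pathstart_subpath pathfinish_subpath)
  then have "intrinsic_dist S (\<gamma> a) (\<gamma> b) \<le> path_len (subpath a b \<gamma>)" by (rule idist_le_path)
  also have "\<dots> \<le> varl \<gamma> a b" using assms by (intro path_len_subpath) auto
  finally show ?thesis .
qed




lemma varl_refl: "varl \<gamma> a a = 0"
proof -
  have "varl \<gamma> a a \<le> 0"
  proof (rule varl_le)
    fix p assume p: "p \<in> vpart a a"
    obtain n t where pt: "p = (n, t)" by fastforce
    have "\<And>k. k \<le> n \<Longrightarrow> t k = a" using part_range[OF p[unfolded pt]] by (meson antisym)
    then have "psum \<gamma> p = 0" unfolding pt psum_def by (intro sum.neutral) auto
    then show "ereal (psum \<gamma> p) \<le> 0" by simp
  qed
  then show ?thesis using varl_nonneg[of a a \<gamma>] by simp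
qed

lemma varl_mono_sub:
  assumes "a \<le> s" "s \<le> t" "t \<le> b"
  shows "varl \<gamma> s t \<le> varl \<gamma> a b"
proof -
  have "varl \<gamma> a b = varl \<gamma> a s + (varl \<gamma> s t + varl \<gamma> t b)"
    using varl_add[of a s b \<gamma>] varl_add[of s t b \<gamma>] assms by simp
  moreover have "varl \<gamma> s t \<le> varl \<gamma> a s + (varl \<gamma> s t + varl \<gamma> t b)"
    using varl_nonneg[of a s \<gamma>] varl_nonneg[of t b \<gamma>] assms
    by (intro add_increasing add_increasing2) auto
  ultimately show ?thesis by simp
qed

lemma midpoint:
  fixes S :: "'a::real_normed_vector set"
  assumes S: "y \<in> S" "x \<in> S" and D: "intrinsic_dist S y x = ereal D"
    and eD: "\<epsilon> \<le> D" and e: "0 < \<epsilon>" and h: "0 < \<eta>"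
  shows "\<exists>z\<in>S. intrinsic_dist S x z < ereal \<epsilon> \<and> intrinsic_dist S y z + ereal \<epsilon> \<le> ereal (D + \<eta>)"
proof -
  obtain \<gamma> where g: "\<gamma> \<in> Paths S y x" "path_len \<gamma> < ereal (D + \<eta>/2)"
    using idist_finite_path[of S y x "D + \<eta>/2"] D h by auto
  have pg: "path \<gamma>" "path_image \<gamma> \<subseteq> S" "\<gamma> 0 = y" "\<gamma> 1 = x"
    using g(1) unfolding Paths_def pathstart_def pathfinish_def by auto
  have L: "varl \<gamma> 0 1 < ereal (D + \<eta>/2)" using g(2) unfolding path_len_varl .
  have fin: "varl \<gamma> s t < \<infinity>" if "0 \<le> s" "s \<le> t" "t \<le> 1" for s t
  proof -
    have "varl \<gamma> s t < ereal (D + \<eta>/2)" using varl_mono_sub[of 0 s t 1 \<gamma>, OF that] L by (rule order.strict_trans1)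
    then show ?thesis by (rule order.strict_trans) simp
  qed
  have gS: "\<gamma> t \<in> S" if "0 \<le> t" "t \<le> 1" for t using pg that unfolding path_image_def by auto
  have idv: "intrinsic_dist S (\<gamma> s) (\<gamma> t) \<le> varl \<gamma> s t" if "0 \<le> s" "s \<le> t" "t \<le> 1" for s t
    using idist_le_varl[OF pg(1,2)] that by simp
  define F where "F t = real_of_ereal (intrinsic_dist S x (\<gamma> t))" for t
  have Fe: "intrinsic_dist S x (\<gamma> t) = ereal (F t)" if "0 \<le> t" "t \<le> 1" for t
  proof -
    have "intrinsic_dist S x (\<gamma> t) = intrinsic_dist S (\<gamma> t) (\<gamma> 1)" using idist_sym[of S x "\<gamma> t"] pg by simp
    also have "\<dots> \<le> varl \<gamma> t 1" using idv that by simp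
    finally have "intrinsic_dist S x (\<gamma> t) < \<infinity>" using fin[of t 1] that by auto
    then show ?thesis unfolding F_def using idist_nonneg[of S x "\<gamma> t"]
      by (cases "intrinsic_dist S x (\<gamma> t)") auto
  qed
  have Flip: "\<bar>F t - F s\<bar> < e'" if st: "0 \<le> s" "s \<le> t" "t \<le> 1" and v: "varl \<gamma> s t < ereal e'" for s t e'
  proof -
    have d0: "intrinsic_dist S (\<gamma> s) (\<gamma> t) < ereal e'" using idv[OF st] v by simp
    obtain dv where dv: "intrinsic_dist S (\<gamma> s) (\<gamma> t) = ereal dv"
      using d0 idist_nonneg[of S "\<gamma> s" "\<gamma> t"] by (cases "intrinsic_dist S (\<gamma> s) (\<gamma> t)") auto
    have d: "intrinsic_dist S (\<gamma> s) (\<gamma> t) = ereal dv" "dv < e'" using dv d0 by auto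
    have "intrinsic_dist S x (\<gamma> t) \<le> intrinsic_dist S x (\<gamma> s) + intrinsic_dist S (\<gamma> s) (\<gamma> t)"
      by (rule idist_triangle)
    also have "\<dots> < ereal (F s) + ereal e'"
      using d Fe[of s] st by simp
    finally have 1: "F t < F s + e'" using Fe[of t] st by simp
    have "intrinsic_dist S x (\<gamma> s) \<le> intrinsic_dist S x (\<gamma> t) + intrinsic_dist S (\<gamma> t) (\<gamma> s)"
      by (rule idist_triangle)
    also have "\<dots> < ereal (F t) + ereal e'"
      using d Fe[of t] st idist_sym[of S "\<gamma> t" "\<gamma> s"] by simp
    finally have 2: "F s < F t + e'" using Fe[of s] st by simp
    show ?thesis using 1 2 by linarith
  qed
  have contF: "continuous_on {0..1} F"
    unfolding continuous_on_iff
  proof (intro ballI allI impI)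
    fix t e' :: real assume t: "t \<in> {0..1}" and e': "0 < e'"
    obtain s1 where s1: "t < s1" "\<And>t'. t \<le> t' \<Longrightarrow> t' < s1 \<Longrightarrow> t' \<le> 1 \<Longrightarrow> varl \<gamma> t t' < ereal e'"
    proof (cases "t < 1")
      case True
      have c: "continuous_on {t..1} \<gamma>" by (rule continuous_on_subset[OF pg(1)[unfolded path_def]]) (use t in auto)
      obtain s where s: "t < s" "s \<le> 1" "varl \<gamma> t s < ereal e'"
        using varl_right[OF c True fin[of t 1] e'] t by auto
      show ?thesis
      proof (rule that[OF s(1)])
        fix t' assume "t \<le> t'" "t' < s" "t' \<le> 1"
        then show "varl \<gamma> t t' < ereal e'" using varl_mono_sub[of t t t' s \<gamma>] s by simp
      qed
    next
      case False
      then have "t = 1" using t by simp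
      show ?thesis
      proof (rule that[of 2])
        fix t' assume "t \<le> t'" "t' < 2" "t' \<le> 1"
        then have "t' = t" using \<open>t = 1\<close> by simp
        then show "varl \<gamma> t t' < ereal e'" using e' by (simp add: varl_refl zero_ereal_def)
      qed (use \<open>t = 1\<close> in simp)
    qed
    obtain s0 where s0: "s0 < t" "\<And>t'. t' \<le> t \<Longrightarrow> s0 < t' \<Longrightarrow> 0 \<le> t' \<Longrightarrow> varl \<gamma> t' t < ereal e'"
    proof (cases "0 < t")
      case True
      have c: "continuous_on {0..t} \<gamma>" by (rule continuous_on_subset[OF pg(1)[unfolded path_def]]) (use t in auto)
      obtain s where s: "0 \<le> s" "s < t" "varl \<gamma> s t < ereal e'"
        using varl_left[OF c True fin[of 0 t] e'] t by auto
      show ?thesis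
      proof (rule that[OF s(2)])
        fix t' assume "t' \<le> t" "s < t'" "0 \<le> t'"
        then show "varl \<gamma> t' t < ereal e'" using varl_mono_sub[of s t' t t \<gamma>] s by simp
      qed
    next
      case False
      then have "t = 0" using t by simp
      show ?thesis
      proof (rule that[of "-1"])
        fix t' assume "t' \<le> t" "-1 < t'" "0 \<le> t'"
        then have "t' = t" using \<open>t = 0\<close> by simp
        then show "varl \<gamma> t' t < ereal e'" using e' by (simp add: varl_refl zero_ereal_def)
      qed (use \<open>t = 0\<close> in simp)
    qed
    show "\<exists>d>0. \<forall>x'\<in>{0..1}. dist x' t < d \<longrightarrow> dist (F x') (F t) < e'"
    proof (intro exI[of _ "min (s1 - t) (t - s0)"] conjI ballI impI)
      show "0 < min (s1 - t) (t - s0)" using s0 s1 by simp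
      fix t' assume t': "t' \<in> {0..1}" "dist t' t < min (s1 - t) (t - s0)"
      show "dist (F t') (F t) < e'"
      proof (cases "t \<le> t'")
        case True
        then have "varl \<gamma> t t' < ereal e'" using s1(2)[of t'] t' by (auto simp: dist_real_def)
        then show ?thesis using Flip[of t t' e'] True t t' by (simp add: dist_real_def)
      next
        case False
        then have "varl \<gamma> t' t < ereal e'" using s0(2)[of t'] t' by (auto simp: dist_real_def)
        then show ?thesis using Flip[of t' t e'] False t t' by (simp add: dist_real_def abs_minus_commute)
      qed
    qed
  qed
  have F0: "F 0 = D"
  proof -
    have "ereal (F 0) = intrinsic_dist S x y" using Fe[of 0] pg by simp
    also have "\<dots> = ereal D" using D idist_sym[of S x y] by simp
    finally show ?thesis by simp
  qed
  have F1: "F 1 = 0" using Fe[of 1] pg idist_refl[OF S(2)] by simp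
  define \<eta>' where "\<eta>' = min (\<eta>/2) (\<epsilon>/2)"
  define c where "c = \<epsilon> - \<eta>'"
  have c: "0 < c" "c < \<epsilon>" "c \<le> D" "0 < \<eta>'" "\<eta>' \<le> \<eta>/2" using e h eD unfolding c_def \<eta>'_def by auto
  have "continuous_on {0..1} (\<lambda>t. - F t)" using contF by (intro continuous_intros)
  then obtain t where t: "0 \<le> t" "t \<le> 1" "- F t = - c"
    using IVT'[of "\<lambda>t. - F t" 0 "-c" 1] F0 F1 c by auto
  define z where "z = \<gamma> t"
  have zS: "z \<in> S" unfolding z_def using gS t by simp
  have xz: "intrinsic_dist S x z = ereal c" unfolding z_def using Fe[of t] t by simp
  have "intrinsic_dist S y z \<le> varl \<gamma> 0 t" unfolding z_def using idv[of 0 t] pg t by simp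
  moreover have "ereal c \<le> varl \<gamma> t 1"
    using idv[of t 1] t pg xz idist_sym[of S x z] unfolding z_def by simp
  ultimately have "intrinsic_dist S y z + ereal c \<le> varl \<gamma> 0 t + varl \<gamma> t 1" by (rule add_mono)
  also have "\<dots> = varl \<gamma> 0 1" using varl_add[of 0 t 1 \<gamma>] t by simp
  finally have "intrinsic_dist S y z + ereal c + ereal \<eta>' \<le> ereal (D + \<eta>/2) + ereal \<eta>'"
    using L by (intro add_right_mono) simp
  moreover have "intrinsic_dist S y z + ereal c + ereal \<eta>' = intrinsic_dist S y z + ereal \<epsilon>"
    unfolding c_def by (simp add: add.assoc)
  ultimately have "intrinsic_dist S y z + ereal \<epsilon> \<le> ereal (D + \<eta>/2) + ereal \<eta>'" by simp
  also have "\<dots> \<le> ereal (D + \<eta>)" using c by simp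
  finally have "intrinsic_dist S y z + ereal \<epsilon> \<le> ereal (D + \<eta>)" .
  moreover have "intrinsic_dist S x z < ereal \<epsilon>" using xz c by simp
  ultimately show ?thesis using zS by blast
qed




lemma rho_step_up:
  assumes "T \<noteq> {}" "intrinsic_dist S x z \<le> ereal \<epsilon>"
  shows "(INF y\<in>T. intrinsic_dist S y z) \<le> (INF y\<in>T. intrinsic_dist S y x) + ereal \<epsilon>"
proof -
  have "(INF y\<in>T. intrinsic_dist S y z) \<le> (INF y\<in>T. intrinsic_dist S y x + ereal \<epsilon>)"
  proof (rule INF_mono)
    fix y assume "y \<in> T"
    have "intrinsic_dist S y z \<le> intrinsic_dist S y x + intrinsic_dist S x z" by (rule idist_triangle)
    also have "\<dots> \<le> intrinsic_dist S y x + ereal \<epsilon>" using assms(2) by (rule add_left_mono)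
    finally show "\<exists>y'\<in>T. intrinsic_dist S y' z \<le> intrinsic_dist S y x + ereal \<epsilon>" using \<open>y \<in> T\<close> by blast
  qed
  also have "\<dots> = (INF y\<in>T. intrinsic_dist S y x) + ereal \<epsilon>"
    by (rule INF_ereal_add_left) (use assms idist_nonneg in auto)
  finally show ?thesis .
qed

lemma rho_step_down:
  fixes S :: "'a::real_normed_vector set"
  assumes xS: "x \<in> S" and TS: "T \<subseteq> S" and rho: "(INF y\<in>T. intrinsic_dist S y x) = ereal \<rho>"
    and e: "0 < \<epsilon>" and h: "0 < \<eta>"
  shows "\<exists>z\<in>S. intrinsic_dist S x z < ereal \<epsilon> \<and> (z \<in> T \<or> (\<exists>y\<in>T. intrinsic_dist S y z + ereal \<epsilon> \<le> ereal (\<rho> + \<eta>)))"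
proof -
  have "(INF y\<in>T. intrinsic_dist S y x) < ereal (\<rho> + \<eta>/2)" using rho h by simp
  then obtain y where y: "y \<in> T" "intrinsic_dist S y x < ereal (\<rho> + \<eta>/2)"
    unfolding INF_less_iff by blast
  show ?thesis
  proof (cases "intrinsic_dist S y x < ereal \<epsilon>")
    case True
    have "y \<in> S" using y TS by blast
    moreover have "intrinsic_dist S x y < ereal \<epsilon>" using True idist_sym[of S x y] by simp
    ultimately show ?thesis using y(1) by blast
  next
    case False
    obtain D where D: "intrinsic_dist S y x = ereal D"
      using y(2) idist_nonneg[of S y x] by (cases "intrinsic_dist S y x") auto
    have eD: "\<epsilon> \<le> D" using False D by simp
    obtain z where z: "z \<in> S" "intrinsic_dist S x z < ereal \<epsilon>" "intrinsic_dist S y z + ereal \<epsilon> \<le> ereal (D + \<eta>/2)"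
      using midpoint[of y S x D \<epsilon> "\<eta>/2"] y TS xS D eD e h by auto
    have "ereal (D + \<eta>/2) \<le> ereal (\<rho> + \<eta>)" using y(2) D by simp
    then show ?thesis using z y by (meson order_trans)
  qed
qed

lemma iball_sub: "iball \<Omega> x \<epsilon> \<subseteq> closure \<Omega>" unfolding iball_def by auto

lemma self_iball: "x \<in> closure \<Omega> \<Longrightarrow> 0 < \<epsilon> \<Longrightarrow> x \<in> iball \<Omega> x \<epsilon>"
  unfolding iball_def using idist_refl[of x "closure \<Omega>"] by (simp add: zero_ereal_def)

lemma bdd_sub:
  fixes w :: "'a::metric_space \<Rightarrow> real"
  assumes "bounded (w ` closure \<Omega>)"
  shows "bdd_below (w ` iball \<Omega> x \<epsilon>)" "bdd_above (w ` iball \<Omega> x \<epsilon>)"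
proof -
  have "bounded (w ` iball \<Omega> x \<epsilon>)" using assms iball_sub by (meson bounded_subset image_mono)
  then show "bdd_below (w ` iball \<Omega> x \<epsilon>)" "bdd_above (w ` iball \<Omega> x \<epsilon>)"
    by (auto intro: bounded_imp_bdd_below bounded_imp_bdd_above)
qed

lemma lap_upper:
  fixes w :: "'a::metric_space \<Rightarrow> real"
  assumes "x \<in> closure \<Omega>" "0 < \<epsilon>" "bounded (w ` closure \<Omega>)" "z \<in> iball \<Omega> x \<epsilon>"
    "\<And>z'. z' \<in> iball \<Omega> x \<epsilon> \<Longrightarrow> w z' \<le> M"
  shows "eps_inf_laplacian \<Omega> \<epsilon> w x \<le> w z + M - 2 * w x"
proof -
  have "(INF y\<in>iball \<Omega> x \<epsilon>. w y) \<le> w z" using bdd_sub[OF assms(3)] assms(4) by (intro cINF_lower)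
  moreover have "(SUP y\<in>iball \<Omega> x \<epsilon>. w y) \<le> M" using assms(4,5) by (intro cSUP_least) auto
  ultimately show ?thesis unfolding eps_inf_laplacian_def by simp
qed

lemma lap_ge:
  fixes w :: "'a::metric_space \<Rightarrow> real"
  assumes "x \<in> closure \<Omega>" "0 < \<epsilon>" "bounded (w ` closure \<Omega>)" "\<And>z. z \<in> closure \<Omega> \<Longrightarrow> \<bar>w z\<bar> \<le> B"
  shows "- 2 * B \<le> eps_inf_laplacian \<Omega> \<epsilon> w x"
proof -
  have xb: "x \<in> iball \<Omega> x \<epsilon>" using self_iball assms by blast
  have "- B \<le> (INF y\<in>iball \<Omega> x \<epsilon>. w y)"
  proof (rule cINF_greatest)
    show "iball \<Omega> x \<epsilon> \<noteq> {}" using xb by blast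
    fix z assume "z \<in> iball \<Omega> x \<epsilon>"
    then have "z \<in> closure \<Omega>" using iball_sub by blast
    then show "- B \<le> w z" using assms(4)[of z] by linarith
  qed
  moreover have "w x \<le> (SUP y\<in>iball \<Omega> x \<epsilon>. w y)" using bdd_sub[OF assms(3)] xb by (intro cSUP_upper)
  moreover have "\<bar>w x\<bar> \<le> B" using assms by simp
  ultimately show ?thesis unfolding eps_inf_laplacian_def by linarith
qed

lemma comparison:
  fixes u v :: "'a::metric_space \<Rightarrow> real"
  assumes opn: "open \<Omega>" and e: "0 < \<epsilon>" and ub: "bounded (u ` closure \<Omega>)" and vb: "bounded (v ` closure \<Omega>)"
    and bd: "\<And>y. y \<in> frontier \<Omega> \<Longrightarrow> u y \<le> v y"
    and subs: "\<And>x. x \<in> \<Omega> \<Longrightarrow> a x \<le> eps_inf_laplacian \<Omega> \<epsilon> u x"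
    and sups: "\<And>x. x \<in> \<Omega> \<Longrightarrow> eps_inf_laplacian \<Omega> \<epsilon> v x \<le> a x - \<theta>"
    and th: "0 < \<theta>"
  shows "\<forall>x\<in>closure \<Omega>. u x \<le> v x"
proof (rule ccontr)
  assume "\<not> ?thesis"
  then obtain x0 where x0: "x0 \<in> closure \<Omega>" "v x0 < u x0" by (meson not_le)
  obtain Bu where Bu: "\<And>z. z \<in> closure \<Omega> \<Longrightarrow> \<bar>u z\<bar> \<le> Bu" using ub unfolding bounded_iff by auto
  obtain Bv where Bv: "\<And>z. z \<in> closure \<Omega> \<Longrightarrow> \<bar>v z\<bar> \<le> Bv" using vb unfolding bounded_iff by auto
  have bdd: "bdd_above ((\<lambda>z. u z - v z) ` closure \<Omega>)"
    unfolding bdd_above_def using Bu Bv by (intro exI[of _ "Bu + Bv"]) (auto, smt (verit))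
  define m where "m = (SUP z\<in>closure \<Omega>. u z - v z)"
  have um: "\<And>z. z \<in> closure \<Omega> \<Longrightarrow> u z - v z \<le> m" unfolding m_def using bdd by (intro cSUP_upper)
  have m0: "0 < m" using um[OF x0(1)] x0 by simp
  define \<eta> where "\<eta> = min m \<theta> / 2"
  have \<eta>: "0 < \<eta>" "\<eta> < m" "2 * \<eta> \<le> \<theta>" using m0 th unfolding \<eta>_def by auto
  have "m - \<eta> < m" using \<eta> by simp
  then obtain x where x: "x \<in> closure \<Omega>" "m - \<eta> < u x - v x"
    unfolding m_def using less_cSUP_iff[OF _ bdd] x0 by (metis empty_iff)
  have "x \<notin> frontier \<Omega>" using bd[of x] x \<eta> by force
  then have xO: "x \<in> \<Omega>" using x(1) opn by (simp add: frontier_def interior_open)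
  let ?B = "iball \<Omega> x \<epsilon>"
  have ne: "?B \<noteq> {}" using self_iball[OF x(1) e] by blast
  have i1: "(INF y\<in>?B. u y) - m \<le> (INF y\<in>?B. v y)"
  proof (rule cINF_greatest[OF ne])
    fix z assume z: "z \<in> ?B"
    have "(INF y\<in>?B. u y) \<le> u z" using bdd_sub[OF ub] z by (intro cINF_lower)
    then show "(INF y\<in>?B. u y) - m \<le> v z" using um[of z] z iball_sub by force
  qed
  have s1: "(SUP y\<in>?B. u y) \<le> (SUP y\<in>?B. v y) + m"
  proof (rule cSUP_least[OF ne])
    fix z assume z: "z \<in> ?B"
    have "v z \<le> (SUP y\<in>?B. v y)" using bdd_sub[OF vb] z by (intro cSUP_upper)
    then show "u z \<le> (SUP y\<in>?B. v y) + m" using um[of z] z iball_sub by force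
  qed
  have "\<theta> \<le> eps_inf_laplacian \<Omega> \<epsilon> u x - eps_inf_laplacian \<Omega> \<epsilon> v x"
    using subs[OF xO] sups[OF xO] by simp
  also have "\<dots> \<le> 2 * m - 2 * (u x - v x)" unfolding eps_inf_laplacian_def using i1 s1 by simp
  also have "\<dots> < 2 * \<eta>" using x by simp
  finally show False using \<eta> by simp
qed




lemma phi_mono:
  fixes P s t :: real
  assumes "s \<le> t" "t \<le> P"
  shows "2 * P * s - s\<^sup>2 \<le> 2 * P * t - t\<^sup>2"
proof -
  have "(2 * P * t - t\<^sup>2) - (2 * P * s - s\<^sup>2) = (t - s) * (2 * P - t - s)"
    by (simp add: algebra_simps power2_eq_square)
  also have "\<dots> \<ge> 0" using assms by (intro mult_nonneg_nonneg) auto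
  finally show ?thesis by simp
qed

lemma phi_step:
  fixes P a \<epsilon> \<eta> :: real
  assumes "0 \<le> a" "0 < \<eta>" "0 < \<epsilon>" "\<epsilon> \<le> 1" "2 * (P + 1) * \<eta> \<le> \<epsilon>\<^sup>2"
  shows "(2 * P * (a - \<epsilon> + \<eta>) - (a - \<epsilon> + \<eta>)\<^sup>2) + (2 * P * (a + \<epsilon>) - (a + \<epsilon>)\<^sup>2) - 2 * (2 * P * a - a\<^sup>2) \<le> - \<epsilon>\<^sup>2"
proof -
  have "(2 * P * (a - \<epsilon> + \<eta>) - (a - \<epsilon> + \<eta>)\<^sup>2) + (2 * P * (a + \<epsilon>) - (a + \<epsilon>)\<^sup>2) - 2 * (2 * P * a - a\<^sup>2)
      = 2 * P * \<eta> - 2 * \<epsilon>\<^sup>2 - 2 * a * \<eta> + 2 * \<epsilon>*\<eta> - \<eta>\<^sup>2"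
    by (simp add: algebra_simps power2_eq_square)
  also have "\<dots> \<le> 2 * P * \<eta> - 2 * \<epsilon>\<^sup>2 + 2 * \<eta>"
  proof -
    have "0 \<le> 2 * a * \<eta>" using assms by simp
    moreover have "\<epsilon>*\<eta> \<le> \<eta>" using assms by (simp add: mult_left_le_one_le mult.commute)
    moreover have "0 \<le> \<eta>\<^sup>2" by simp
    ultimately show ?thesis by linarith
  qed
  also have "\<dots> \<le> - \<epsilon>\<^sup>2" using assms(5) by (simp add: algebra_simps)
  finally show ?thesis .
qed

lemma upper_bound:
  fixes \<Omega> :: "'a::real_normed_vector set"
    and f :: "'a \<Rightarrow> real" and g :: "'a \<Rightarrow> real"
    and eps :: "nat \<Rightarrow> real" and u :: "nat \<Rightarrow> 'a \<Rightarrow> real"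
  assumes opn: "open \<Omega>"
    and width_fin: "width \<Omega> < \<infinity>"
    and g_cont: "continuous_on (frontier \<Omega>) g"
    and g_bdd: "bounded (g ` frontier \<Omega>)"
    and eps_pos: "\<And>i. eps i > 0"
    and eps_lim: "eps \<longlonglongrightarrow> 0"
    and u_bdd: "\<And>i. bounded (u i ` closure \<Omega>)"
    and u_eq: "\<And>i x. x \<in> \<Omega> \<Longrightarrow> eps_inf_laplacian \<Omega> (eps i) (u i) x = (eps i)\<^sup>2 * f x"
    and u_bd: "\<And>i y. y \<in> frontier \<Omega> \<Longrightarrow> u i y = g y"
    and y0: "y0 \<in> frontier \<Omega>" and e: "0 < e"
  shows "\<exists>\<delta>>0. \<exists>N::nat. \<forall>x\<in>\<Omega>. \<forall>i>N. intrinsic_dist (closure \<Omega>) y0 x \<le> ereal \<delta> \<longrightarrow> u i x \<le> g y0 + e"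
proof -
  let ?S = "closure \<Omega>"
  let ?fr = "frontier \<Omega>"
  have clos: "?S = \<Omega> \<union> ?fr" by (rule closure_Un_frontier)
  have disj: "\<And>z. z \<in> ?fr \<Longrightarrow> z \<notin> \<Omega>" using opn by (simp add: frontier_def interior_open)
  have frS: "?fr \<subseteq> ?S" using clos by blast
  have OS: "\<Omega> \<subseteq> ?S" by (rule closure_subset)
  have y0S: "y0 \<in> ?S" using y0 frS by blast
  obtain B0 where B0: "\<And>z. z \<in> ?S \<Longrightarrow> \<bar>u 0 z\<bar> \<le> B0"
    using u_bdd[of 0] unfolding bounded_iff by auto
  define Fm where "Fm = 2 * B0 / (eps 0)\<^sup>2"
  have fF: "- Fm \<le> f x" if x: "x \<in> \<Omega>" for x
  proof -
    have "- 2 * B0 \<le> eps_inf_laplacian \<Omega> (eps 0) (u 0) x"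
      using lap_ge[OF _ eps_pos u_bdd B0] x OS by blast
    then have a: "- 2 * B0 \<le> (eps 0)\<^sup>2 * f x" using u_eq[OF x] by simp
    have pos: "0 < (eps 0)\<^sup>2" using eps_pos[of 0] by simp
    have "(- 2 * B0) / (eps 0)\<^sup>2 \<le> f x"
      unfolding pos_divide_le_eq[OF pos] using a by (simp add: mult.commute)
    then show ?thesis unfolding Fm_def by simp
  qed
  obtain z where z: "width \<Omega> < z" "z < \<infinity>" using dense[OF width_fin] by blast
  obtain W1 where W1: "width \<Omega> < ereal W1" using z by (cases z) auto
  define W where "W = max W1 0"
  have W: "0 \<le> W" unfolding W_def by simp
  have W0: "width \<Omega> < ereal W" using W1 unfolding W_def by (rule order.strict_trans2) simp
  have hW: "(INF y\<in>?fr. intrinsic_dist ?S y x) < ereal W" if "x \<in> \<Omega>" for x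
  proof -
    have "(INF y\<in>?fr. intrinsic_dist ?S y x) \<le> width \<Omega>" unfolding width_def using that by (rule SUP_upper)
    then show ?thesis using W0 by (rule order.strict_trans1)
  qed
  obtain G where G: "\<And>y. y \<in> ?fr \<Longrightarrow> \<bar>g y\<bar> \<le> G" using g_bdd unfolding bounded_iff by auto
  have G0: "0 \<le> G" using G[OF y0] by simp
  have gy0: "\<bar>g y0\<bar> \<le> G" using G[OF y0] .
  have gy0': "- G \<le> g y0" using gy0 by (simp add: abs_le_iff)
  obtain r0 where r0: "0 < r0" "\<And>y. y \<in> ?fr \<Longrightarrow> dist y y0 < r0 \<Longrightarrow> dist (g y) (g y0) < e/2"
    using g_cont y0 e unfolding continuous_on_iff by (metis half_gt_zero)
  define r where "r = min r0 1"
  have r: "0 < r" "r \<le> 1" "r \<le> r0" using r0 unfolding r_def by auto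
  have gr: "g y \<le> g y0 + e/2" if "y \<in> ?fr" "intrinsic_dist ?S y0 y < ereal r" for y
  proof -
    have "ereal (dist y0 y) < ereal r" using dist_le_idist[of y0 y ?S] that(2) by (rule order.strict_trans1)
    then have "dist y y0 < r0" using r by (simp add: dist_commute)
    then have "dist (g y) (g y0) < e/2" using r0(2) that(1) by blast
    then have "\<bar>g y - g y0\<bar> < e/2" by (simp add: dist_real_def)
    then show ?thesis by linarith
  qed
  define \<kappa> where "\<kappa> = \<bar>Fm\<bar> + 1"
  define P where "P = W + 2"
  define \<Psi> where "\<Psi> = \<kappa> * (3 * P\<^sup>2)"
  define K where "K = G + \<Psi>"
  define A where "A = \<kappa> + (2 * G + 2 * \<Psi> + 1) * 2 / r\<^sup>2"
  define \<delta> where "\<delta> = e / (8 * A)"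
  define \<epsilon>0 where "\<epsilon>0 = min (min 1 (r/4)) (e/(12 * A))"
  have \<kappa>: "1 \<le> \<kappa>" unfolding \<kappa>_def by simp
  have P: "2 \<le> P" unfolding P_def using W by simp
  have \<Psi>0: "0 \<le> \<Psi>" unfolding \<Psi>_def using \<kappa> by simp
  have A\<kappa>: "\<kappa> \<le> A" unfolding A_def using G0 \<Psi>0 r by simp
  have A0: "0 < A" using A\<kappa> \<kappa> by simp
  have \<delta>0: "0 < \<delta>" unfolding \<delta>_def using e A0 by simp
  have \<epsilon>00: "0 < \<epsilon>0" unfolding \<epsilon>0_def using e A0 r by simp
  obtain N where N: "\<And>i. N \<le> i \<Longrightarrow> \<bar>eps i\<bar> < \<epsilon>0"
    using eps_lim \<epsilon>00 unfolding LIMSEQ_iff by (metis real_norm_def diff_zero)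
  show ?thesis
  proof (intro exI[of _ \<delta>] conjI exI[of _ N] ballI allI impI)
    show "0 < \<delta>" by (rule \<delta>0)
    fix x i assume xO: "x \<in> \<Omega>" and iN: "N < i" and dx: "intrinsic_dist ?S y0 x \<le> ereal \<delta>"
    define \<epsilon> where "\<epsilon> = eps i"
    have \<epsilon>: "0 < \<epsilon>" "\<epsilon> \<le> 1" "\<epsilon> \<le> r/4" "\<epsilon> < e/(12 * A)"
    proof -
      have "\<bar>eps i\<bar> < \<epsilon>0" using N iN by simp
      then show "0 < \<epsilon>" "\<epsilon> \<le> 1" "\<epsilon> \<le> r/4" "\<epsilon> < e/(12 * A)"
        using eps_pos[of i] unfolding \<epsilon>_def \<epsilon>0_def by auto
    qed
    define h where "h z = (INF y\<in>?fr. intrinsic_dist ?S y z)" for z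
    define H where "H z = (if z \<in> \<Omega> then real_of_ereal (h z) else - \<epsilon>)" for z
    define \<phi>2 where "\<phi>2 t = 2 * P * t - t\<^sup>2" for t
    define v2 where "v2 z = K + \<kappa> * \<phi>2 (H z)" for z
    define Dr where "Dr z = real_of_ereal (min (intrinsic_dist ?S y0 z) (ereal r))" for z
    define Dt where "Dt z = Dr z - (if z \<in> \<Omega> then 0 else \<epsilon>)" for z
    define \<phi>1 where "\<phi>1 t = 2 * r * t - t\<^sup>2" for t
    define c1 where "c1 = g y0 + e/2 + 3 * A * \<epsilon>"
    define v1 where "v1 z = c1 + A * \<phi>1 (Dt z)" for z
    define v where "v z = min (v1 z) (v2 z)" for z
    define \<eta> where "\<eta> = \<epsilon>\<^sup>2 / (2 * (W + 3))"
    have \<eta>: "0 < \<eta>" "2 * (P + 1) * \<eta> \<le> \<epsilon>\<^sup>2" "4 * \<eta> \<le> \<epsilon>\<^sup>2"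
    proof -
      show "0 < \<eta>" unfolding \<eta>_def using \<epsilon> W by simp
      have "2 * (P + 1) * \<eta> = \<epsilon>\<^sup>2" unfolding \<eta>_def P_def using W by (simp add: field_simps)
      then show "2 * (P + 1) * \<eta> \<le> \<epsilon>\<^sup>2" by simp
      moreover have "4 * \<eta> \<le> 2 * (P + 1) * \<eta>" using P \<open>0 < \<eta>\<close> by (intro mult_right_mono) auto
      ultimately show "4 * \<eta> \<le> \<epsilon>\<^sup>2" by linarith
    qed
    have \<eta>\<epsilon>: "\<eta> \<le> \<epsilon>"
    proof -
      have "\<epsilon>\<^sup>2 \<le> \<epsilon>" using \<epsilon> by (simp add: power2_eq_square mult_left_le_one_le)
      then show ?thesis using \<eta>(1,3) by linarith
    qed
    have hfin: "h z = ereal (H z) \<and> 0 \<le> H z \<and> H z < W" if "z \<in> \<Omega>" for z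
    proof -
      have "0 \<le> h z" unfolding h_def by (rule INF_greatest) (rule idist_nonneg)
      moreover have "h z < ereal W" using hW[OF that] unfolding h_def .
      ultimately show ?thesis using that unfolding H_def by (cases "h z") auto
    qed
    have Hfr: "H z = - \<epsilon>" if "z \<in> ?fr" for z using disj[OF that] unfolding H_def by simp
    have Hr: "- 1 \<le> H z \<and> H z \<le> W" if "z \<in> ?S" for z
    proof (cases "z \<in> \<Omega>")
      case True then show ?thesis using hfin[OF True] by auto
    next
      case False then have "z \<in> ?fr" using that clos by blast
      then show ?thesis using Hfr \<epsilon> W by auto
    qed
    have \<phi>2b: "\<bar>\<kappa> * \<phi>2 t\<bar> \<le> \<Psi>" if "- 1 \<le> t" "t \<le> W" for t
    proof -
      have at: "\<bar>t\<bar> \<le> P" using that P unfolding P_def by auto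
      have "\<bar>\<phi>2 t\<bar> \<le> \<bar>2 * P * t\<bar> + \<bar>t\<^sup>2\<bar>" unfolding \<phi>2_def by (rule abs_triangle_ineq4)
      also have "\<bar>2 * P * t\<bar> \<le> 2 * P * P" using at P by (simp add: abs_mult)
      also have "\<bar>t\<^sup>2\<bar> \<le> P\<^sup>2"
      proof -
        have "\<bar>t\<bar>\<^sup>2 \<le> P\<^sup>2" using at by (intro power_mono) auto
        then show ?thesis by simp
      qed
      finally have "\<bar>\<phi>2 t\<bar> \<le> 3 * P\<^sup>2" by (simp add: power2_eq_square)
      then have "\<kappa> * \<bar>\<phi>2 t\<bar> \<le> \<kappa> * (3 * P\<^sup>2)" using \<kappa> by (intro mult_left_mono) auto
      then show ?thesis unfolding \<Psi>_def using \<kappa> by (simp add: abs_mult)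
    qed
    have v2b: "G \<le> v2 z \<and> v2 z \<le> G + 2 * \<Psi>" if "z \<in> ?S" for z
      using \<phi>2b[of "H z"] Hr[OF that] unfolding v2_def K_def by auto
    have \<phi>2m: "\<phi>2 s \<le> \<phi>2 t" if "s \<le> t" "t \<le> P" for s t
      unfolding \<phi>2_def using phi_mono[OF that] .
    have \<phi>1m: "\<phi>1 s \<le> \<phi>1 t" if "s \<le> t" "t \<le> r" for s t
      unfolding \<phi>1_def using phi_mono[OF that] .
    have Dre: "ereal (Dr z) = min (intrinsic_dist ?S y0 z) (ereal r) \<and> 0 \<le> Dr z \<and> Dr z \<le> r" for z
    proof -
      have "0 \<le> intrinsic_dist ?S y0 z" by (rule idist_nonneg)
      then show ?thesis unfolding Dr_def using r by (cases "intrinsic_dist ?S y0 z") (auto simp: min_def)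
    qed
    have Dtr: "- \<epsilon> \<le> Dt z \<and> Dt z \<le> r" for z using Dre[of z] \<epsilon> unfolding Dt_def by auto
    have \<phi>1low: "- 3 * \<epsilon> \<le> \<phi>1 t" if "- \<epsilon> \<le> t" "t \<le> r" for t
    proof -
      have "\<phi>1 (- \<epsilon>) \<le> \<phi>1 t" using \<phi>1m that by blast
      moreover have "- 3 * \<epsilon> \<le> \<phi>1 (- \<epsilon>)"
      proof -
        have "r * \<epsilon> \<le> \<epsilon>" using r \<epsilon> by (simp add: mult_left_le_one_le mult.commute)
        moreover have "\<epsilon>\<^sup>2 \<le> \<epsilon>" using \<epsilon> by (simp add: power2_eq_square mult_left_le_one_le)
        ultimately show ?thesis unfolding \<phi>1_def by (simp add: power2_eq_square)
      qed
      ultimately show ?thesis by simp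
    qed
    have v1low: "g y0 + e/2 \<le> v1 z" for z
    proof -
      have "A * (- 3 * \<epsilon>) \<le> A * \<phi>1 (Dt z)" using \<phi>1low Dtr[of z] A0 by (intro mult_left_mono) auto
      then show ?thesis unfolding v1_def c1_def by simp
    qed
    have BIG: "v2 z < v1 z" if "z \<in> ?S" "r/2 \<le> Dt z" for z
    proof -
      have "\<phi>1 (r/2) \<le> \<phi>1 (Dt z)" using \<phi>1m that(2) Dtr[of z] by blast
      moreover have "\<phi>1 (r/2) = 3 * r\<^sup>2 / 4" unfolding \<phi>1_def by (simp add: power2_eq_square field_simps)
      ultimately have p: "3 * r\<^sup>2 / 4 \<le> \<phi>1 (Dt z)" by simp
      have r2: "0 < r\<^sup>2" using r by simp
      have "A * \<phi>1 (Dt z) \<ge> A * (3 * r\<^sup>2 / 4)" using p A0 by (intro mult_left_mono) auto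
      moreover have "A * (3 * r\<^sup>2 / 4) = \<kappa> * (3 * r\<^sup>2 / 4) + (2 * G + 2 * \<Psi> + 1) * 3 / 2"
        unfolding A_def using r2 by (simp add: field_simps)
      moreover have "0 \<le> \<kappa> * (3 * r\<^sup>2 / 4)" using \<kappa> by simp
      ultimately have "A * \<phi>1 (Dt z) \<ge> (2 * G + 2 * \<Psi> + 1) * 3 / 2" by linarith
      moreover have "0 \<le> A * \<epsilon>" using A0 \<epsilon> by simp
      ultimately have "v1 z \<ge> g y0 + e/2 + (2 * G + 2 * \<Psi> + 1) * 3 / 2" unfolding v1_def c1_def by linarith
      moreover have "- G \<le> g y0" using gy0 by (simp add: abs_le_iff)
      moreover have "v2 z \<le> G + 2 * \<Psi>" using v2b[OF that(1)] by simp
      moreover have "(2 * G + 2 * \<Psi> + 1) * 3 / 2 = 3 * G + 3 * \<Psi> + 3 / 2" by (simp add: field_simps)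
      ultimately show ?thesis using e G0 \<Psi>0 by linarith
    qed
    have vb: "\<bar>v z\<bar> \<le> G + 2 * \<Psi>" if "z \<in> ?S" for z
      using v2b[OF that] v1low[of z] gy0' e G0 unfolding v_def by (auto simp: min_def)
    have vbdd: "bounded (v ` ?S)" unfolding bounded_iff using vb by (auto intro!: exI[of _ "G + 2 * \<Psi>"])
    have bd: "u i y \<le> v y" if y: "y \<in> ?fr" for y
    proof -
      have "g y \<le> v2 y" using v2b[of y] G[OF y] y frS by force
      moreover have "g y \<le> v1 y"
      proof (cases "intrinsic_dist ?S y0 y < ereal r")
        case True then show ?thesis using gr[OF y True] v1low[of y] by simp
      next
        case False
        then have "min (intrinsic_dist ?S y0 y) (ereal r) = ereal r" by (simp add: min_absorb2 not_less)
        then have "Dr y = r" using Dre[of y] by simp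
        then have "r/2 \<le> Dt y" unfolding Dt_def using disj[OF y] \<epsilon> by simp
        then have "v2 y < v1 y" using BIG y frS by blast
        then show ?thesis using \<open>g y \<le> v2 y\<close> by simp
      qed
      ultimately show ?thesis unfolding v_def using u_bd[OF y] by simp
    qed
    have super: "eps_inf_laplacian \<Omega> \<epsilon> v x' \<le> - \<kappa> * \<epsilon>\<^sup>2" if x': "x' \<in> \<Omega>" for x'
    proof -
      have x'S: "x' \<in> ?S" using x' OS by blast
      have inS: "z \<in> ?S" if "z \<in> iball \<Omega> x' \<epsilon>" for z using that iball_sub by blast
      have dle: "intrinsic_dist ?S x' z \<le> ereal \<epsilon>" if "z \<in> iball \<Omega> x' \<epsilon>" for z
        using that unfolding iball_def by auto
      show ?thesis
      proof (cases "v2 x' \<le> v1 x'")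
        case True
        then have vx: "v x' = v2 x'" unfolding v_def by simp
        obtain hx where hx: "h x' = ereal hx" "H x' = hx" "0 \<le> hx" "hx < W" using hfin[OF x'] by auto
        have frne: "?fr \<noteq> {}" using hx(1) unfolding h_def by (auto simp: top_ereal_def)
        have up: "v z \<le> K + \<kappa> * \<phi>2 (hx + \<epsilon>)" if z: "z \<in> iball \<Omega> x' \<epsilon>" for z
        proof -
          have "H z \<le> hx + \<epsilon>"
          proof (cases "z \<in> \<Omega>")
            case True
            have "h z \<le> h x' + ereal \<epsilon>" unfolding h_def by (rule rho_step_up[OF frne dle[OF z]])
            then show ?thesis using hfin[OF True] hx by simp
          next
            case False
            then have "z \<in> ?fr" using inS[OF z] clos by blast
            then show ?thesis using Hfr hx \<epsilon> by simp
          qed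
          then have "\<phi>2 (H z) \<le> \<phi>2 (hx + \<epsilon>)" using \<phi>2m hx \<epsilon> unfolding P_def by simp
          then have "v2 z \<le> K + \<kappa> * \<phi>2 (hx + \<epsilon>)" unfolding v2_def using \<kappa> by simp
          then show ?thesis unfolding v_def by simp
        qed
        obtain z where z: "z \<in> ?S" "intrinsic_dist ?S x' z < ereal \<epsilon>"
            "z \<in> ?fr \<or> (\<exists>y\<in>?fr. intrinsic_dist ?S y z + ereal \<epsilon> \<le> ereal (hx + \<eta>))"
          using rho_step_down[OF x'S frS _ \<epsilon>(1) \<eta>(1), of hx] hx(1) unfolding h_def by blast
        have zb: "z \<in> iball \<Omega> x' \<epsilon>" using z unfolding iball_def by simp
        have "H z \<le> hx - \<epsilon> + \<eta>"
        proof (cases "z \<in> \<Omega>")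
          case True
          then have "z \<notin> ?fr" using disj by blast
          then obtain y where y: "y \<in> ?fr" "intrinsic_dist ?S y z + ereal \<epsilon> \<le> ereal (hx + \<eta>)" using z(3) by blast
          have "h z \<le> intrinsic_dist ?S y z" unfolding h_def using y(1) by (rule INF_lower)
          then have "h z + ereal \<epsilon> \<le> ereal (hx + \<eta>)" using y(2) by (meson add_right_mono order_trans)
          then show ?thesis using hfin[OF True] by simp
        next
          case False
          then have "z \<in> ?fr" using z(1) clos by blast
          then show ?thesis using Hfr hx \<eta> by simp
        qed
        then have "\<phi>2 (H z) \<le> \<phi>2 (hx - \<epsilon> + \<eta>)" using \<phi>2m hx \<eta>\<epsilon> unfolding P_def by simp
        then have "\<kappa> * \<phi>2 (H z) \<le> \<kappa> * \<phi>2 (hx - \<epsilon> + \<eta>)" using \<kappa> by (intro mult_left_mono) auto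
        then have "v2 z \<le> K + \<kappa> * \<phi>2 (hx - \<epsilon> + \<eta>)" unfolding v2_def by simp
        then have down: "v z \<le> K + \<kappa> * \<phi>2 (hx - \<epsilon> + \<eta>)" unfolding v_def by simp
        have "eps_inf_laplacian \<Omega> \<epsilon> v x' \<le> v z + (K + \<kappa> * \<phi>2 (hx + \<epsilon>)) - 2 * v x'"
          by (rule lap_upper[OF x'S \<epsilon>(1) vbdd zb up])
        also have "\<dots> \<le> \<kappa> * (\<phi>2 (hx - \<epsilon> + \<eta>) + \<phi>2 (hx + \<epsilon>) - 2 * \<phi>2 hx)"
          using down vx hx unfolding v2_def by (simp add: algebra_simps)
        also have "\<dots> \<le> \<kappa> * (- \<epsilon>\<^sup>2)"
          using phi_step[OF hx(3) \<eta>(1) \<epsilon>(1,2) \<eta>(2)] \<kappa> unfolding \<phi>2_def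
          by (intro mult_left_mono) auto
        finally show ?thesis by simp
      next
        case False
        then have vx: "v x' = v1 x'" unfolding v_def by simp
        have "Dt x' < r/2" using BIG[OF x'S] False by force
        then have dxr: "Dr x' < r/2" unfolding Dt_def using x' by simp
        define dx where "dx = Dr x'"
        have dx0: "0 \<le> dx" unfolding dx_def using Dre by simp
        have dxe: "intrinsic_dist ?S y0 x' = ereal dx"
        proof -
          have "min (intrinsic_dist ?S y0 x') (ereal r) = ereal dx" using Dre[of x'] unfolding dx_def by simp
          moreover have "dx < r" using dxr r unfolding dx_def by simp
          ultimately show ?thesis by (auto simp: min_def split: if_splits)
        qed
        have up: "v z \<le> c1 + A * \<phi>1 (dx + \<epsilon>)" if z: "z \<in> iball \<Omega> x' \<epsilon>" for z
        proof -
          have "intrinsic_dist ?S y0 z \<le> intrinsic_dist ?S y0 x' + intrinsic_dist ?S x' z" by (rule idist_triangle)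
          also have "\<dots> \<le> ereal dx + ereal \<epsilon>" unfolding dxe using dle[OF z] by (rule add_left_mono)
          finally have "ereal (Dr z) \<le> ereal (dx + \<epsilon>)" using Dre[of z] by (simp add: min.coboundedI1)
          then have "Dt z \<le> dx + \<epsilon>" unfolding Dt_def using \<epsilon> by simp
          moreover have "dx + \<epsilon> \<le> r" using dxr \<epsilon> unfolding dx_def by simp
          ultimately have "\<phi>1 (Dt z) \<le> \<phi>1 (dx + \<epsilon>)" by (rule \<phi>1m)
          then have "A * \<phi>1 (Dt z) \<le> A * \<phi>1 (dx + \<epsilon>)" using A0 by (intro mult_left_mono) auto
          then have "v1 z \<le> c1 + A * \<phi>1 (dx + \<epsilon>)" unfolding v1_def by simp
          then show ?thesis unfolding v_def by simp
        qed
        have rho0: "(INF y\<in>{y0}. intrinsic_dist ?S y x') = ereal dx" using dxe by simp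
        obtain z where z: "z \<in> ?S" "intrinsic_dist ?S x' z < ereal \<epsilon>"
            "z \<in> {y0} \<or> (\<exists>y\<in>{y0}. intrinsic_dist ?S y z + ereal \<epsilon> \<le> ereal (dx + \<eta>))"
          using rho_step_down[OF x'S _ rho0 \<epsilon>(1) \<eta>(1)] y0S by blast
        have zb: "z \<in> iball \<Omega> x' \<epsilon>" using z unfolding iball_def by simp
        have "Dt z \<le> dx - \<epsilon> + \<eta>"
        proof (cases "z = y0")
          case True
          have "Dr y0 = 0" using Dre[of y0] idist_refl[OF y0S] r by (simp add: min_def zero_ereal_def)
          then show ?thesis unfolding Dt_def using True disj[OF y0] dx0 \<eta> by simp
        next
          case False
          then have "intrinsic_dist ?S y0 z + ereal \<epsilon> \<le> ereal (dx + \<eta>)" using z(3) by blast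
          moreover have "ereal (Dr z) \<le> intrinsic_dist ?S y0 z" using Dre[of z] by simp
          ultimately have "ereal (Dr z) + ereal \<epsilon> \<le> ereal (dx + \<eta>)" by (meson add_right_mono order_trans)
          then have "Dr z \<le> dx - \<epsilon> + \<eta>" by simp
          then show ?thesis unfolding Dt_def using \<epsilon> by simp
        qed
        moreover have "dx - \<epsilon> + \<eta> \<le> r" using dxr \<eta>\<epsilon> r(1) unfolding dx_def by linarith
        ultimately have "\<phi>1 (Dt z) \<le> \<phi>1 (dx - \<epsilon> + \<eta>)" by (rule \<phi>1m)
        then have "A * \<phi>1 (Dt z) \<le> A * \<phi>1 (dx - \<epsilon> + \<eta>)" using A0 by (intro mult_left_mono) auto
        then have "v1 z \<le> c1 + A * \<phi>1 (dx - \<epsilon> + \<eta>)" unfolding v1_def by simp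
        then have down: "v z \<le> c1 + A * \<phi>1 (dx - \<epsilon> + \<eta>)" unfolding v_def by simp
        have vx1: "v1 x' = c1 + A * \<phi>1 dx" unfolding v1_def Dt_def dx_def using x' by simp
        have "eps_inf_laplacian \<Omega> \<epsilon> v x' \<le> v z + (c1 + A * \<phi>1 (dx + \<epsilon>)) - 2 * v x'"
          by (rule lap_upper[OF x'S \<epsilon>(1) vbdd zb up])
        also have "\<dots> \<le> A * (\<phi>1 (dx - \<epsilon> + \<eta>) + \<phi>1 (dx + \<epsilon>) - 2 * \<phi>1 dx)"
          using down vx vx1 by (simp add: algebra_simps)
        also have "\<dots> \<le> A * (- \<epsilon>\<^sup>2)"
        proof -
          have "2 * (r + 1) * \<eta> \<le> \<epsilon>\<^sup>2"
          proof -
            have "2 * (r + 1) * \<eta> \<le> 4 * \<eta>" using r \<eta>(1) by (intro mult_right_mono) auto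
            then show ?thesis using \<eta>(3) by linarith
          qed
          then show ?thesis
            using phi_step[OF dx0 \<eta>(1) \<epsilon>(1,2)] A0 unfolding \<phi>1_def
            by (intro mult_left_mono) auto
        qed
        also have "\<dots> \<le> - \<kappa> * \<epsilon>\<^sup>2" using A\<kappa> by (simp add: mult_right_mono)
        finally show ?thesis .
      qed
    qed
    have cmp: "\<forall>z\<in>?S. u i z \<le> v z"
    proof (rule comparison[OF opn \<epsilon>(1) _ vbdd, where a = "\<lambda>x. \<epsilon>\<^sup>2 * f x" and \<theta> = "\<epsilon>\<^sup>2"])
      show "bounded (u i ` ?S)" using u_bdd unfolding \<epsilon>_def by blast
      show "\<And>y. y \<in> ?fr \<Longrightarrow> u i y \<le> v y" by (rule bd)
      show "\<And>x. x \<in> \<Omega> \<Longrightarrow> \<epsilon>\<^sup>2 * f x \<le> eps_inf_laplacian \<Omega> \<epsilon> (u i) x"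
        using u_eq unfolding \<epsilon>_def by simp
      show "0 < \<epsilon>\<^sup>2" using \<epsilon> by simp
      fix x' assume x': "x' \<in> \<Omega>"
      have "- \<kappa> * \<epsilon>\<^sup>2 \<le> \<epsilon>\<^sup>2 * f x' - \<epsilon>\<^sup>2"
      proof -
        have "- \<bar>Fm\<bar> \<le> f x'" using fF[OF x'] by linarith
        then have "\<epsilon>\<^sup>2 * (- \<bar>Fm\<bar>) \<le> \<epsilon>\<^sup>2 * f x'" by (intro mult_left_mono) auto
        then show ?thesis unfolding \<kappa>_def by (simp add: algebra_simps)
      qed
      then show "eps_inf_laplacian \<Omega> \<epsilon> v x' \<le> \<epsilon>\<^sup>2 * f x' - \<epsilon>\<^sup>2" using super[OF x'] by linarith
    qed
    have "u i x \<le> v x" using cmp xO OS by blast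
    also have "\<dots> \<le> v1 x" unfolding v_def by simp
    also have "\<dots> = c1 + A * \<phi>1 (Dr x)" unfolding v1_def Dt_def using xO by simp
    also have "\<dots> \<le> g y0 + e"
    proof -
      have "ereal (Dr x) \<le> ereal \<delta>" using Dre[of x] dx by (simp add: min.coboundedI1)
      then have D\<delta>: "Dr x \<le> \<delta>" by simp
      have "\<phi>1 (Dr x) \<le> 2 * r * Dr x" unfolding \<phi>1_def by simp
      also have "\<dots> \<le> 2 * Dr x"
      proof -
        have "0 \<le> Dr x" using Dre[of x] by simp
        then have "r * Dr x \<le> Dr x" using mult_left_le_one_le[of "Dr x" r] r by simp
        then show ?thesis by simp
      qed
      also have "\<dots> \<le> 2 * \<delta>" using D\<delta> by simp
      finally have "A * \<phi>1 (Dr x) \<le> A * (2 * \<delta>)" using A0 by (intro mult_left_mono) auto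
      also have "\<dots> = e / 4" unfolding \<delta>_def using A0 by (simp add: field_simps)
      finally have a: "A * \<phi>1 (Dr x) \<le> e / 4" .
      have "A * \<epsilon> < A * (e / (12 * A))" using \<epsilon>(4) A0 by (rule mult_strict_left_mono)
      also have "\<dots> = e / 12" using A0 by (simp add: field_simps)
      finally have b: "A * \<epsilon> < e / 12" .
      show ?thesis unfolding c1_def using a b by linarith
    qed
    finally show "u i x \<le> g y0 + e" .
  qed
qed




lemma lap_neg: "eps_inf_laplacian \<Omega> \<epsilon> (\<lambda>y. - w y) x = - eps_inf_laplacian \<Omega> \<epsilon> w x"
proof -
  have i: "(INF y\<in>B. - w y) = - (SUP y\<in>B. w y)" for B :: "'a set"
    unfolding Inf_real_def by (simp add: image_image)
  have s: "(SUP y\<in>B. - w y) = - (INF y\<in>B. w y)" for B :: "'a set"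
    unfolding Inf_real_def by (simp add: image_image)
  show ?thesis unfolding eps_inf_laplacian_def i s by simp
qed

lemma bounded_neg_img: "bounded (w ` S) \<Longrightarrow> bounded ((\<lambda>y. - w y :: real) ` S)"
  unfolding bounded_iff by auto

theorem lemma5p4:
  fixes \<Omega> :: "'a::euclidean_space set"
    and f :: "'a \<Rightarrow> real" and g :: "'a \<Rightarrow> real"
    and eps :: "nat \<Rightarrow> real" and u :: "nat \<Rightarrow> 'a \<Rightarrow> real"
  assumes domain: "open \<Omega>" "connected \<Omega>" "\<Omega> \<noteq> {}"
    and width_fin: "width \<Omega> < \<infinity>"
    and f_meas: "f \<in> borel_measurable (lebesgue_on \<Omega>)"
    and f_Linf: "\<exists>C. AE x in lebesgue. x \<in> \<Omega> \<longrightarrow> \<bar>f x\<bar> \<le> C"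
    and g_cont: "continuous_on (frontier \<Omega>) g"
    and g_bdd: "bounded (g ` frontier \<Omega>)"
    and eps_pos: "\<And>i. eps i > 0"
    and eps_lim: "eps \<longlonglongrightarrow> 0"
    and u_bdd: "\<And>i. bounded (u i ` closure \<Omega>)"
    and u_eq: "\<And>i x. x \<in> \<Omega> \<Longrightarrow> eps_inf_laplacian \<Omega> (eps i) (u i) x = (eps i)\<^sup>2 * f x"
    and u_bd: "\<And>i y. y \<in> frontier \<Omega> \<Longrightarrow> u i y = g y"
  shows "\<forall>y0 \<in> frontier \<Omega>. \<forall>e > 0. \<exists>\<delta> > 0. \<exists>N::nat. \<forall>x \<in> \<Omega>. \<forall>i > N.
           intrinsic_dist (closure \<Omega>) y0 x \<le> ereal \<delta> \<longrightarrow> \<bar>u i x - g y0\<bar> \<le> e"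
proof (intro ballI allI impI)
  fix y0 :: 'a and e :: real
  assume y0: "y0 \<in> frontier \<Omega>" and e: "0 < e"
  obtain \<delta>1 N1 where d1: "0 < \<delta>1"
    and U: "\<And>x i. x \<in> \<Omega> \<Longrightarrow> N1 < i \<Longrightarrow> intrinsic_dist (closure \<Omega>) y0 x \<le> ereal \<delta>1 \<Longrightarrow> u i x \<le> g y0 + e"
    using upper_bound[OF domain(1) width_fin g_cont g_bdd eps_pos eps_lim u_bdd u_eq u_bd y0 e] by blast
  have g_cont': "continuous_on (frontier \<Omega>) (\<lambda>x. - g x)" using g_cont by (intro continuous_intros)
  have g_bdd': "bounded ((\<lambda>x. - g x) ` frontier \<Omega>)" using g_bdd by (rule bounded_neg_img)
  have u_bdd': "bounded ((\<lambda>x. - u i x) ` closure \<Omega>)" for i using u_bdd[of i] by (rule bounded_neg_img)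
  have u_eq': "eps_inf_laplacian \<Omega> (eps i) (\<lambda>x. - u i x) x = (eps i)\<^sup>2 * (- f x)" if "x \<in> \<Omega>" for i x
    using u_eq[OF that, of i] by (simp add: lap_neg)
  have u_bd': "- u i y = - g y" if "y \<in> frontier \<Omega>" for i y using u_bd[OF that] by simp
  obtain \<delta>2 N2 where d2: "0 < \<delta>2"
    and L: "\<And>x i. x \<in> \<Omega> \<Longrightarrow> N2 < i \<Longrightarrow> intrinsic_dist (closure \<Omega>) y0 x \<le> ereal \<delta>2 \<Longrightarrow> - u i x \<le> - g y0 + e"
    using upper_bound[where u = "\<lambda>i x. - u i x" and g = "\<lambda>x. - g x" and f = "\<lambda>x. - f x",
        OF domain(1) width_fin g_cont' g_bdd' eps_pos eps_lim u_bdd' u_eq' u_bd' y0 e] by blast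
  show "\<exists>\<delta>>0. \<exists>N::nat. \<forall>x\<in>\<Omega>. \<forall>i>N. intrinsic_dist (closure \<Omega>) y0 x \<le> ereal \<delta> \<longrightarrow> \<bar>u i x - g y0\<bar> \<le> e"
  proof (intro exI[of _ "min \<delta>1 \<delta>2"] conjI exI[of _ "max N1 N2"] ballI allI impI)
    show "0 < min \<delta>1 \<delta>2" using d1 d2 by simp
    fix x i assume x: "x \<in> \<Omega>" and i: "max N1 N2 < i" and d: "intrinsic_dist (closure \<Omega>) y0 x \<le> ereal (min \<delta>1 \<delta>2)"
    have "intrinsic_dist (closure \<Omega>) y0 x \<le> ereal \<delta>1" using d by (rule order_trans) simp
    then have 1: "u i x \<le> g y0 + e" using U x i by simp
    have "intrinsic_dist (closure \<Omega>) y0 x \<le> ereal \<delta>2" using d by (rule order_trans) simp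
    then have 2: "- u i x \<le> - g y0 + e" using L x i by simp
    show "\<bar>u i x - g y0\<bar> \<le> e" using 1 2 by linarith
  qed
qed


end
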